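(* For every $(s_1,s_2,s_3)\in\mathbb{C}^3$ and $Z\in\mathcal{H}_3$, \[ p_{s_1,s_2,s_3}(-Z^{-1})=e^{(s_1+2s_2+3s_3)\pi i}\,p_{s_2,s_1,-s_1-s_2-s_3}(WZW),\qquad W=\begin{pmatrix}0&0&1\\0&1&0\\1&0&0\end{pmatrix}. \]
   Context: $\mathcal{H}_n$ is the Siegel upper half space of degree $n$ and $\mathcal{P}_n$ the cone of real symmetric positive definite $n\times n$ matrices. Let $h_n:\mathcal{H}_n\to\mathbb{C}$ be the unique holomorphic function with $e^{h_n(Z)}=\det Z$ and $h_n(iY)=\frac{\pi i n}{2}+\log\det Y$ for $Y\in\mathcal{P}_n$. For $Z\in\mathcal{H}_3$ with upper left $j\times j$ block $Z_j$, $p_{s,w,u}(Z)=e^{s h_1(Z_1)}e^{w h_2(Z_2)}e^{u h_3(Z)}$. *)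

theory Defs
  imports "HOL-Analysis.Analysis" "HOL-Library.Numeral_Type"
begin

definition posdef_cone :: "(real^'n^'n) set" where
  "posdef_cone = {Y. transpose Y = Y \<and> (\<forall>x::real^'n. x \<noteq> 0 \<longrightarrow> x \<bullet> (Y *v x) > 0)}"

definition im_mat :: "complex^'n^'n \<Rightarrow> real^'n^'n" where
  "im_mat Z = (\<chi> i j. Im (Z $ i $ j))"

definition siegel_H :: "(complex^'n^'n) set" where
  "siegel_H = {Z. transpose Z = Z \<and> im_mat Z \<in> posdef_cone}"

text \<open>Holomorphy of a function on the Siegel upper half space (a relatively open subset of
  the complex vector space of symmetric matrices): complex Frechet differentiability,
  i.e. a Frechet derivative that is complex linear.\<close>
definition holomorphic_siegel :: "(complex^'n^'n \<Rightarrow> complex) \<Rightarrow> bool" where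
  "holomorphic_siegel f \<longleftrightarrow>
     (\<forall>Z\<in>siegel_H. \<exists>D. (\<forall>c A. D (\<chi> i j. c * A $ i $ j) = c * D A) \<and>
                        (f has_derivative D) (at Z within siegel_H))"

text \<open>The holomorphic branch h_n of log det on H_n, normalised on iP_n
  (extended by 0 outside H_n so that it is a uniquely determined total function).\<close>
definition h_siegel :: "complex^'n^'n \<Rightarrow> complex" where
  "h_siegel = (THE f. holomorphic_siegel f \<and>
      (\<forall>Z\<in>siegel_H. exp (f Z) = det Z) \<and>
      (\<forall>Y\<in>posdef_cone. f (\<chi> i j. \<i> * complex_of_real (Y $ i $ j)) =
            pi * \<i> * of_nat CARD('n) / 2 + complex_of_real (ln (det Y))) \<and>
      (\<forall>Z. Z \<notin> siegel_H \<longrightarrow> f Z = 0))"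

text \<open>Upper left 1x1 and 2x2 blocks of a 3x3 matrix (indices 0,1,2 of type 3 in order).\<close>
definition block1 :: "complex^3^3 \<Rightarrow> complex^1^1" where
  "block1 Z = (\<chi> i j. Z $ 0 $ 0)"

definition idx23 :: "2 \<Rightarrow> 3" where
  "idx23 i = (if i = 0 then 0 else 1)"

definition block2 :: "complex^3^3 \<Rightarrow> complex^2^2" where
  "block2 Z = (\<chi> i j. Z $ idx23 i $ idx23 j)"

definition p_fun :: "complex \<Rightarrow> complex \<Rightarrow> complex \<Rightarrow> complex^3^3 \<Rightarrow> complex" where
  "p_fun s w u Z = exp (s * h_siegel (block1 Z)) * exp (w * h_siegel (block2 Z)) * exp (u * h_siegel Z)"

definition W3 :: "complex^3^3" where
  "W3 = (\<chi> i j. if i + j = 2 then 1 else 0)"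

end

theory Submission
  imports Defs
begin

lemma three0: "(3::3) = 0" by simp
lemma two0: "(2::2) = 0" by simp
lemma one0: "(1::1) = 0" using UNIV_1 by (metis UNIV_I singletonD)
lemma UNIV3: "(UNIV::3 set) = {0,1,2}"
  using UNIV_3 unfolding three0 by auto
lemma UNIV2: "(UNIV::2 set) = {0,1}"
  using UNIV_2 unfolding two0 by auto
lemma UNIV1: "(UNIV::1 set) = {0}"
  using UNIV_1 unfolding one0 by auto
lemma sum3: "sum f (UNIV::3 set) = f 0 + f 1 + f 2"
  unfolding UNIV3 by (simp add: add.assoc)
lemma sum2: "sum f (UNIV::2 set) = f 0 + f 1"
  unfolding UNIV2 by simp
lemma sum1: "sum f (UNIV::1 set) = f 0"
  unfolding UNIV1 by simp
lemma det3: "det (A::'a::comm_ring_1^3^3) =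
    A$0$0 * A$1$1 * A$2$2 + A$0$1 * A$1$2 * A$2$0 + A$0$2 * A$1$0 * A$2$1
  - A$0$0 * A$1$2 * A$2$1 - A$0$1 * A$1$0 * A$2$2 - A$0$2 * A$1$1 * A$2$0"
  using det_3[of A] unfolding three0 by (simp add: algebra_simps)
lemma det2: "det (A::'a::comm_ring_1^2^2) = A$0$0 * A$1$1 - A$0$1 * A$1$0"
  using det_2[of A] unfolding two0 by (simp add: algebra_simps)
lemma det1: "det (A::'a::comm_ring_1^1^1) = A$0$0"
  using det_1[of A] unfolding one0 by (simp add: algebra_simps)
lemma sym_entry: assumes "transpose Z = Z" shows "Z$i$j = Z$j$i"
  by (metis assms transpose_def vec_lambda_beta)

lemma siegel_quad:
  fixes Z :: "complex^'n^'n" and x :: "complex^'n"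
  assumes Z: "Z \<in> siegel_H" and x: "x \<noteq> 0"
  shows "Im (\<Sum>i\<in>UNIV. cnj (x$i) * (Z *v x)$i) > 0"
proof -
  define a where "a = (\<chi> i. Re (x$i))"
  define b where "b = (\<chi> i. Im (x$i))"
  have sym: "transpose Z = Z" and pd: "im_mat Z \<in> posdef_cone" using Z by (auto simp: siegel_H_def)
  have e1: "Im (\<Sum>i\<in>UNIV. cnj (x$i) * (Z *v x)$i) =
     (\<Sum>i\<in>UNIV. \<Sum>j\<in>UNIV. Im(Z$i$j) * (a$i*a$j + b$i*b$j)) + (\<Sum>i\<in>UNIV. \<Sum>j\<in>UNIV. Re(Z$i$j) * (a$i*b$j - b$i*a$j))"
    by (simp add: matrix_vector_mult_def sum_distrib_left Im_sum sum.distrib[symmetric] a_def b_def algebra_simps)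
  have e2: "(\<Sum>i\<in>UNIV. \<Sum>j\<in>UNIV. Re(Z$i$j) * (a$i*b$j - b$i*a$j)) = 0"
  proof -
    have "(\<Sum>i\<in>UNIV. \<Sum>j\<in>UNIV. Re(Z$i$j) * (b$i*a$j)) = (\<Sum>j\<in>UNIV. \<Sum>i\<in>UNIV. Re(Z$i$j) * (b$i*a$j))"
      by (rule sum.swap)
    also have "\<dots> = (\<Sum>i\<in>UNIV. \<Sum>j\<in>UNIV. Re(Z$i$j) * (a$i*b$j))"
      using sym_entry[OF sym] by (simp add: mult_ac)
    finally show ?thesis by (simp add: right_diff_distrib sum_subtractf)
  qed
  have e3: "(\<Sum>i\<in>UNIV. \<Sum>j\<in>UNIV. Im(Z$i$j) * (a$i*a$j + b$i*b$j)) = a \<bullet> (im_mat Z *v a) + b \<bullet> (im_mat Z *v b)"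
    by (simp add: inner_vec_def matrix_vector_mult_def im_mat_def sum_distrib_left sum.distrib algebra_simps)
  have ab: "a \<noteq> 0 \<or> b \<noteq> 0"
  proof (rule ccontr)
    assume "\<not> ?thesis"
    then have "\<forall>i. x$i = 0" by (auto simp: a_def b_def vec_eq_iff complex_eq_iff)
    with x show False by (simp add: vec_eq_iff)
  qed
  have qa: "a \<bullet> (im_mat Z *v a) \<ge> 0" using pd by (cases "a = 0") (auto simp: posdef_cone_def intro: less_imp_le)
  have qb: "b \<bullet> (im_mat Z *v b) \<ge> 0" using pd by (cases "b = 0") (auto simp: posdef_cone_def intro: less_imp_le)
  have "a \<bullet> (im_mat Z *v a) + b \<bullet> (im_mat Z *v b) > 0"
    using ab qa qb pd unfolding posdef_cone_def by force
  then show ?thesis using e1 e2 e3 by simp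
qed





lemma qf_expand: "x \<bullet> (M *v x) = (\<Sum>i\<in>UNIV. \<Sum>j\<in>UNIV. x$i * M$i$j * x$j)"
  for M :: "real^'n^'n"
  by (simp add: inner_vec_def matrix_vector_mult_def sum_distrib_left mult_ac)

lemma convex_siegel: "convex (siegel_H :: (complex^'n^'n) set)"
  unfolding convex_def
proof (intro ballI allI impI)
  fix X Y :: "complex^'n^'n" and u v :: real
  assume X: "X \<in> siegel_H" and Y: "Y \<in> siegel_H" and uv: "0 \<le> u" "0 \<le> v" "u + v = 1"
  have sX: "X$i$j = X$j$i" and sY: "Y$i$j = Y$j$i" for i j
    using X Y by (auto simp: siegel_H_def intro: sym_entry)
  have "transpose (u *\<^sub>R X + v *\<^sub>R Y) = u *\<^sub>R X + v *\<^sub>R Y"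
    by (simp add: transpose_def vec_eq_iff sX[of _ ] sY)
  moreover have "im_mat (u *\<^sub>R X + v *\<^sub>R Y) \<in> posdef_cone"
  proof -
    have tr: "transpose (im_mat (u *\<^sub>R X + v *\<^sub>R Y)) = im_mat (u *\<^sub>R X + v *\<^sub>R Y)"
      by (simp add: transpose_def im_mat_def vec_eq_iff sX[of _ ] sY)
    { fix x :: "real^'n" assume x: "x \<noteq> 0"
      have a: "x \<bullet> (im_mat X *v x) > 0" "x \<bullet> (im_mat Y *v x) > 0"
        using X Y x by (auto simp: siegel_H_def posdef_cone_def)
      have "x \<bullet> (im_mat (u *\<^sub>R X + v *\<^sub>R Y) *v x) = u * (x \<bullet> (im_mat X *v x)) + v * (x \<bullet> (im_mat Y *v x))"
        by (simp add: qf_expand im_mat_def sum_distrib_left sum.distrib algebra_simps)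
      also have "\<dots> > 0"
      proof (cases "u = 0")
        case True then show ?thesis using uv a by simp
      next
        case False then have "u > 0" using uv by simp
        then show ?thesis using uv a by (simp add: add_pos_nonneg)
      qed
      finally have "x \<bullet> (im_mat (u *\<^sub>R X + v *\<^sub>R Y) *v x) > 0" . }
    then show ?thesis using tr by (simp add: posdef_cone_def)
  qed
  ultimately show "u *\<^sub>R X + v *\<^sub>R Y \<in> siegel_H" by (simp add: siegel_H_def)
qed

lemma connected_siegel: "connected (siegel_H :: (complex^'n^'n) set)"
  by (rule convex_connected[OF convex_siegel])

lemma exp1_const:
  fixes F :: "'a::topological_space \<Rightarrow> complex"
  assumes S: "connected S" and c: "continuous_on S F" and e: "\<And>z. z \<in> S \<Longrightarrow> exp (F z) = 1"
    and a: "a \<in> S" "F a = 0" and z: "z \<in> S"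
  shows "F z = 0"
proof -
  have "F constant_on S"
  proof (rule continuous_discrete_range_constant[OF S c])
    fix x assume x: "x \<in> S"
    show "\<exists>e>0. \<forall>y. y \<in> S \<and> F y \<noteq> F x \<longrightarrow> e \<le> norm (F y - F x)"
    proof (intro exI[of _ 1] conjI allI impI)
      fix y assume y: "y \<in> S \<and> F y \<noteq> F x"
      have "exp (F y - F x) = 1" using e x y by (simp add: exp_diff)
      then obtain n :: int where n: "Re (F y - F x) = 0" "Im (F y - F x) = 2 * pi * n"
        by (auto simp: exp_eq_1)
      have "n \<noteq> 0" using n y by (auto simp: complex_eq_iff)
      then have "1 \<le> \<bar>real_of_int n\<bar>" by linarith
      then have "1 \<le> 2 * pi * \<bar>real_of_int n\<bar>" using pi_gt3 by (smt (verit) mult_le_cancel_right1)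
      also have "\<dots> = \<bar>Im (F y - F x)\<bar>" using n pi_gt_zero by (simp add: abs_mult)
      also have "\<dots> \<le> norm (F y - F x)" by (rule abs_Im_le_cmod)
      finally show "1 \<le> norm (F y - F x)" .
    qed simp
  qed
  then show ?thesis using a z by (metis constant_on_def)
qed

lemma posdef_siegel: assumes "Y \<in> posdef_cone"
  shows "(\<chi> i j. \<i> * complex_of_real (Y $ i $ j)) \<in> siegel_H"
proof -
  have "transpose Y = Y" using assms by (simp add: posdef_cone_def)
  then have s: "Y$i$j = Y$j$i" for i j by (rule sym_entry)
  have "im_mat (\<chi> i j. \<i> * complex_of_real (Y $ i $ j)) = Y" by (simp add: im_mat_def vec_eq_iff)
  moreover have "transpose (\<chi> i j. \<i> * complex_of_real (Y $ i $ j)) = (\<chi> i j. \<i> * complex_of_real (Y $ i $ j))"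
    using s by (simp add: transpose_def vec_eq_iff)
  ultimately show ?thesis using assms by (simp add: siegel_H_def)
qed

lemma mat1_posdef: "(mat 1 :: real^'n^'n) \<in> posdef_cone"
  unfolding posdef_cone_def by (auto simp: transpose_mat matrix_vector_mul_lid)

definition hP :: "(complex^'n^'n \<Rightarrow> complex) \<Rightarrow> bool" where
  "hP f \<longleftrightarrow> holomorphic_siegel f \<and>
      (\<forall>Z\<in>siegel_H. exp (f Z) = det Z) \<and>
      (\<forall>Y\<in>posdef_cone. f (\<chi> i j. \<i> * complex_of_real (Y $ i $ j)) =
            pi * \<i> * of_nat CARD('n) / 2 + complex_of_real (ln (det Y))) \<and>
      (\<forall>Z. Z \<notin> siegel_H \<longrightarrow> f Z = 0)"

lemma holo_cont: assumes "holomorphic_siegel (f :: complex^'n^'n \<Rightarrow> complex)" shows "continuous_on siegel_H f"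
  unfolding continuous_on_eq_continuous_within
proof
  fix Z :: "complex^'n^'n" assume "Z \<in> siegel_H"
  then obtain D where "(f has_derivative D) (at Z within siegel_H)"
    using assms unfolding holomorphic_siegel_def by blast
  then show "continuous (at Z within siegel_H) f" by (rule has_derivative_continuous)
qed

lemma hP_unique: assumes f: "hP f" and g: "hP (g :: complex^'n^'n \<Rightarrow> complex)" shows "f = g"
proof
  fix Z :: "complex^'n^'n"
  show "f Z = g Z"
  proof (cases "Z \<in> siegel_H")
    case False then show ?thesis using f g by (simp add: hP_def)
  next
    case True
    define I where "I = (\<chi> i j. \<i> * complex_of_real ((mat 1 :: real^'n^'n) $ i $ j))"
    have I: "I \<in> siegel_H" unfolding I_def by (rule posdef_siegel[OF mat1_posdef])
    have "(\<lambda>Z. f Z - g Z) Z = 0"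
    proof (rule exp1_const[OF connected_siegel _ _ I _ True])
      show "continuous_on siegel_H (\<lambda>Z. f Z - g Z)"
        using f g by (intro continuous_on_diff holo_cont) (auto simp: hP_def)
      show "exp (f Z - g Z) = 1" if "Z \<in> siegel_H" for Z
      proof -
        have "exp (f Z) = det Z" "exp (g Z) = det Z" using f g that by (auto simp: hP_def)
        moreover have "det Z \<noteq> 0" by (metis calculation(1) exp_not_eq_zero)
        ultimately show ?thesis by (simp add: exp_diff)
      qed
      have fa: "\<forall>Y\<in>posdef_cone. f (\<chi> i j. \<i> * complex_of_real (Y $ i $ j)) =
            pi * \<i> * of_nat CARD('n) / 2 + complex_of_real (ln (det Y))" using f unfolding hP_def by blast
      have ga: "\<forall>Y\<in>posdef_cone. g (\<chi> i j. \<i> * complex_of_real (Y $ i $ j)) =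
            pi * \<i> * of_nat CARD('n) / 2 + complex_of_real (ln (det Y))" using g unfolding hP_def by blast
      show "f I - g I = 0" unfolding I_def using fa[rule_format, OF mat1_posdef] ga[rule_format, OF mat1_posdef] by (simp del: det_I)
    qed
    then show ?thesis by simp
  qed
qed

lemma h_siegel_eq: fixes f :: "complex^'n^'n \<Rightarrow> complex" assumes "hP f" shows "h_siegel = f"
  unfolding h_siegel_def
proof (rule the_equality)
  show "holomorphic_siegel f \<and>
      (\<forall>Z\<in>siegel_H. exp (f Z) = det Z) \<and>
      (\<forall>Y\<in>posdef_cone. f (\<chi> i j. \<i> * complex_of_real (Y $ i $ j)) =
            pi * \<i> * of_nat CARD('n) / 2 + complex_of_real (ln (det Y))) \<and>
      (\<forall>Z. Z \<notin> siegel_H \<longrightarrow> f Z = 0)" using assms unfolding hP_def .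
  fix g :: "complex^'n^'n \<Rightarrow> complex" assume "holomorphic_siegel g \<and>
      (\<forall>Z\<in>siegel_H. exp (g Z) = det Z) \<and>
      (\<forall>Y\<in>posdef_cone. g (\<chi> i j. \<i> * complex_of_real (Y $ i $ j)) =
            pi * \<i> * of_nat CARD('n) / 2 + complex_of_real (ln (det Y))) \<and>
      (\<forall>Z. Z \<notin> siegel_H \<longrightarrow> g Z = 0)"
  then have "hP g" unfolding hP_def .
  then show "g = f" using hP_unique assms by blast
qed




definition clin :: "(complex^'n^'n \<Rightarrow> complex) \<Rightarrow> bool" where
  "clin D \<longleftrightarrow> (\<forall>c A. D (\<chi> i j. c * A$i$j) = c * D A)"

definition cd :: "(complex^'n^'n \<Rightarrow> complex) \<Rightarrow> complex^'n^'n \<Rightarrow> bool" where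
  "cd f Z \<longleftrightarrow> (\<exists>D. clin D \<and> (f has_derivative D) (at Z within siegel_H))"

lemma cd_const: "cd (\<lambda>Z. c) Z"
  unfolding cd_def clin_def by (intro exI[of _ "\<lambda>_. 0"]) (auto intro: has_derivative_const)

lemma cd_entry: "cd (\<lambda>Z::complex^'n^'n. Z$i$j) Z"
  unfolding cd_def clin_def
proof (intro exI[of _ "\<lambda>A. A$i$j"] conjI allI)
  have "bounded_linear (\<lambda>A::complex^'n^'n. A$i$j)"
    by (rule bounded_linear_compose[of "\<lambda>x::complex^'n. x$j" "\<lambda>A::complex^'n^'n. A$i"]) (rule bounded_linear_vec_nth)+
  then show "((\<lambda>Z::complex^'n^'n. Z$i$j) has_derivative (\<lambda>A. A$i$j)) (at Z within siegel_H)"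
    by (rule bounded_linear_imp_has_derivative)
qed simp

lemma cd_add: assumes "cd f Z" "cd g Z" shows "cd (\<lambda>Z. f Z + g Z) Z"
proof -
  obtain D1 where 1: "clin D1" "(f has_derivative D1) (at Z within siegel_H)" using assms(1) unfolding cd_def by blast
  obtain D2 where 2: "clin D2" "(g has_derivative D2) (at Z within siegel_H)" using assms(2) unfolding cd_def by blast
  show ?thesis unfolding cd_def
    by (rule exI[of _ "\<lambda>h. D1 h + D2 h"], rule conjI[OF _ has_derivative_add[OF 1(2) 2(2)]])
       (use 1(1) 2(1) in \<open>simp add: clin_def algebra_simps\<close>)
qed

lemma cd_diff: assumes "cd f Z" "cd g Z" shows "cd (\<lambda>Z. f Z - g Z) Z"
proof -
  obtain D1 where 1: "clin D1" "(f has_derivative D1) (at Z within siegel_H)" using assms(1) unfolding cd_def by blast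
  obtain D2 where 2: "clin D2" "(g has_derivative D2) (at Z within siegel_H)" using assms(2) unfolding cd_def by blast
  show ?thesis unfolding cd_def
    by (rule exI[of _ "\<lambda>h. D1 h - D2 h"], rule conjI[OF _ has_derivative_diff[OF 1(2) 2(2)]])
       (use 1(1) 2(1) in \<open>simp add: clin_def algebra_simps\<close>)
qed

lemma cd_mult: assumes "cd f Z" "cd g Z" shows "cd (\<lambda>Z. f Z * g Z) Z"
proof -
  obtain D1 where 1: "clin D1" "(f has_derivative D1) (at Z within siegel_H)" using assms(1) unfolding cd_def by blast
  obtain D2 where 2: "clin D2" "(g has_derivative D2) (at Z within siegel_H)" using assms(2) unfolding cd_def by blast
  show ?thesis unfolding cd_def
    by (rule exI[of _ "\<lambda>h. f Z * D2 h + D1 h * g Z"], rule conjI[OF _ has_derivative_mult[OF 1(2) 2(2)]])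
       (use 1(1) 2(1) in \<open>simp add: clin_def algebra_simps\<close>)
qed

lemma cd_inverse: assumes "cd f Z" "f Z \<noteq> 0" shows "cd (\<lambda>Z. inverse (f Z)) Z"
proof -
  obtain D1 where 1: "clin D1" "(f has_derivative D1) (at Z within siegel_H)" using assms(1) unfolding cd_def by blast
  show ?thesis unfolding cd_def
    by (rule exI[of _ "\<lambda>h. - (inverse (f Z) * D1 h * inverse (f Z))"], rule conjI[OF _ Deriv.has_derivative_inverse[OF assms(2) 1(2)]])
       (use 1(1) in \<open>simp add: clin_def algebra_simps\<close>)
qed

lemma cd_divide: "cd f Z \<Longrightarrow> cd g Z \<Longrightarrow> g Z \<noteq> 0 \<Longrightarrow> cd (\<lambda>Z. f Z / g Z) Z"
  unfolding divide_inverse by (intro cd_mult cd_inverse)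

lemma cd_Ln: assumes "cd f Z" "Im (f Z) > 0" shows "cd (\<lambda>Z. Ln (f Z)) Z"
proof -
  obtain D where D: "clin D" "(f has_derivative D) (at Z within siegel_H)" using assms unfolding cd_def by blast
  have nr: "f Z \<notin> \<real>\<^sub>\<le>\<^sub>0" using assms(2) by (auto simp: complex_nonpos_Reals_iff)
  have "(Ln has_derivative (\<lambda>h. inverse (f Z) * h)) (at (f Z))"
    using has_field_derivative_Ln[OF nr] by (simp add: has_field_derivative_def)
  from has_derivative_compose[OF D(2) this]
  have "((\<lambda>Z. Ln (f Z)) has_derivative (\<lambda>h. inverse (f Z) * D h)) (at Z within siegel_H)" .
  moreover have "clin (\<lambda>h. inverse (f Z) * D h)" using D(1) by (simp add: clin_def)
  ultimately show ?thesis unfolding cd_def by blast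
qed

lemma cd_holo: fixes f g :: "complex^'n^'n \<Rightarrow> complex" assumes "\<And>Z. Z \<in> siegel_H \<Longrightarrow> cd g Z" "\<And>Z. Z \<in> siegel_H \<Longrightarrow> f Z = g Z"
  shows "holomorphic_siegel f"
  unfolding holomorphic_siegel_def
proof
  fix Z :: "complex^'n^'n" assume Z: "Z \<in> siegel_H"
  obtain D where D: "clin D" "(g has_derivative D) (at Z within siegel_H)" using assms(1)[OF Z] unfolding cd_def by blast
  have "(f has_derivative D) (at Z within siegel_H)"
    by (rule has_derivative_transform[OF Z _ D(2)]) (use assms(2) in auto)
  then show "\<exists>D. (\<forall>c A. D (\<chi> i j. c * A $ i $ j) = c * D A) \<and> (f has_derivative D) (at Z within siegel_H)"
    using D(1) unfolding clin_def by blast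
qed




definition v3 :: "'a \<Rightarrow> 'a \<Rightarrow> 'a \<Rightarrow> 'a^3" where "v3 p q r = (\<chi> k. if k = 0 then p else if k = 1 then q else r)"
lemma v3_nth[simp]: "v3 p q r $ 0 = p" "v3 p q r $ 1 = q" "v3 p q r $ 2 = r"
  by (simp_all add: v3_def)
definition v2 :: "'a \<Rightarrow> 'a \<Rightarrow> 'a^2" where "v2 p q = (\<chi> k. if k = 0 then p else q)"
lemma v2_nth[simp]: "v2 p q $ 0 = p" "v2 p q $ 1 = q"
  by (simp_all add: v2_def)

definition m2 :: "complex^3^3 \<Rightarrow> complex" where "m2 Z = Z$0$0 * Z$1$1 - Z$0$1 * Z$1$0"

lemma quad3: assumes "Z \<in> siegel_H" "x \<noteq> (0::complex^3)"
  shows "Im (cnj (x$0) * (Z *v x)$0 + cnj (x$1) * (Z *v x)$1 + cnj (x$2) * (Z *v x)$2) > 0"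
  using siegel_quad[OF assms] by (simp add: sum3)

lemma mv3: "(Z *v x)$i = Z$i$0 * x$0 + Z$i$1 * x$1 + Z$i$2 * x$2"
  for Z :: "'a::comm_semiring_1^3^3" by (simp add: matrix_vector_mult_def sum3)

lemma schur3:
  assumes Z: "Z \<in> siegel_H"
  shows "Im (Z$0$0) > 0" "Im (m2 Z / Z$0$0) > 0" "Im (det Z / m2 Z) > 0"
proof -
  have sym: "transpose Z = Z" using Z by (simp add: siegel_H_def)
  note s = sym_entry[OF sym]
  define a b c d e f where defs: "a = Z$0$0" "b = Z$0$1" "c = Z$0$2" "d = Z$1$1" "e = Z$1$2" "f = Z$2$2"
  have ents: "Z$0$0 = a" "Z$0$1 = b" "Z$1$0 = b" "Z$0$2 = c" "Z$2$0 = c" "Z$1$1 = d" "Z$1$2 = e" "Z$2$1 = e" "Z$2$2 = f"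
    using s by (auto simp: defs)
  have dt: "det Z = a*d*f + 2*b*c*e - a*e*e - b*b*f - c*c*d"
    by (simp add: det3 ents algebra_simps)
  have m: "m2 Z = a*d - b*b" by (simp add: m2_def ents)
  have x1: "v3 (1::complex) 0 0 \<noteq> 0" by (metis v3_nth(1) zero_index one_neq_zero)
  from quad3[OF Z x1] show a: "Im (Z$0$0) > 0" by (simp add: mv3)
  then have a0: "a \<noteq> 0" by (auto simp: defs)
  have x2: "v3 (-b/a) (1::complex) 0 \<noteq> 0" by (metis v3_nth(2) zero_index one_neq_zero)
  from quad3[OF Z x2] have "Im (cnj (-b/a) * (a * (-b/a) + b) + (b * (-b/a) + d)) > 0"
    by (simp add: mv3 ents)
  also have "cnj (-b/a) * (a * (-b/a) + b) + (b * (-b/a) + d) = m2 Z / Z$0$0"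
    using a0 by (simp add: m ents field_simps)
  finally show m2p: "Im (m2 Z / Z$0$0) > 0" .
  then have m0: "a*d - b*b \<noteq> 0" using a0 by (auto simp: m)
  define D where "D = a*d - b*b"
  have D0: "D \<noteq> 0" using m0 by (simp add: D_def)
  define w0 w1 where wdefs: "w0 = (d*c - b*e)/D" "w1 = (a*e - b*c)/D"
  have x3: "v3 (-w0) (-w1) (1::complex) \<noteq> 0" by (metis v3_nth(3) zero_index one_neq_zero)
  have r0: "a * (-w0) + b * (-w1) + c = 0" using D0 unfolding wdefs by (simp add: field_simps, unfold D_def, algebra)
  have r1: "b * (-w0) + d * (-w1) + e = 0" using D0 unfolding wdefs by (simp add: field_simps, unfold D_def, algebra)
  have r2: "c * (-w0) + e * (-w1) + f = det Z / m2 Z" using D0 unfolding wdefs dt m D_def[symmetric] by (simp add: field_simps, unfold D_def, algebra)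
  have q: "(Z *v v3 (-w0) (-w1) 1)$0 = 0" "(Z *v v3 (-w0) (-w1) 1)$1 = 0" "(Z *v v3 (-w0) (-w1) 1)$2 = det Z / m2 Z"
    using r0 r1 r2 unfolding mv3 ents v3_nth by simp_all
  from quad3[OF Z x3] show "Im (det Z / m2 Z) > 0"
    unfolding q by simp
qed




lemma cd_det3: "cd (\<lambda>Z::complex^3^3. det Z) Z"
  unfolding det3 by (intro cd_add cd_diff cd_mult cd_entry)

lemma cd_m2: "cd m2 Z"
  unfolding m2_def by (intro cd_add cd_diff cd_mult cd_entry)

definition f3 :: "complex^3^3 \<Rightarrow> complex" where
  "f3 Z = (if Z \<in> siegel_H then Ln (Z$0$0) + Ln (m2 Z / Z$0$0) + Ln (det Z / m2 Z) else 0)"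

lemma Ln_ii_real: "r > 0 \<Longrightarrow> Ln (\<i> * complex_of_real r) = complex_of_real (ln r) + \<i> * pi / 2"
  using Ln_times_of_real[of r \<i>] by (simp add: mult.commute Ln_of_real)

lemma Im_ii_real: "Im (\<i> * complex_of_real r) = r" by simp

lemma hP_f3: "hP f3"
  unfolding hP_def
proof (intro conjI ballI allI impI)
  show "holomorphic_siegel f3"
  proof (rule cd_holo)
    fix Z :: "complex^3^3" assume Z: "Z \<in> siegel_H"
    note sc = schur3[OF Z]
    have n: "Z$0$0 \<noteq> 0" "m2 Z \<noteq> 0" using sc by auto
    show "cd (\<lambda>Z. Ln (Z$0$0) + Ln (m2 Z / Z$0$0) + Ln (det Z / m2 Z)) Z"
      by (intro cd_add cd_Ln cd_divide cd_entry cd_m2 cd_det3 n sc)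
    show "f3 Z = Ln (Z$0$0) + Ln (m2 Z / Z$0$0) + Ln (det Z / m2 Z)" using Z by (simp add: f3_def)
  qed
next
  fix Z :: "complex^3^3" assume Z: "Z \<in> siegel_H"
  note sc = schur3[OF Z]
  have n: "Z$0$0 \<noteq> 0" "m2 Z \<noteq> 0" "det Z / m2 Z \<noteq> 0" using sc by auto
  then show "exp (f3 Z) = det Z" using Z by (simp add: f3_def exp_add)
next
  fix Z :: "complex^3^3" assume "Z \<notin> siegel_H" then show "f3 Z = 0" by (simp add: f3_def)
next
  fix Y :: "real^3^3" assume Y: "Y \<in> posdef_cone"
  define Z where "Z = (\<chi> i j. \<i> * complex_of_real (Y $ i $ j))"
  have Z: "Z \<in> siegel_H" unfolding Z_def by (rule posdef_siegel[OF Y])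
  have ze: "Z$i$j = \<i> * complex_of_real (Y$i$j)" for i j by (simp add: Z_def)
  define mr where "mr = Y$0$0 * Y$1$1 - Y$0$1 * Y$1$0"
  have m2Z: "m2 Z = - complex_of_real mr" by (simp add: m2_def ze mr_def algebra_simps)
  have dZ: "det Z = - \<i> * complex_of_real (det Y)" by (simp add: det3 ze algebra_simps)
  note sc = schur3[OF Z]
  have y0: "Y$0$0 > 0" using sc(1) by (simp add: ze)
  have q1: "m2 Z / Z$0$0 = \<i> * complex_of_real (mr / Y$0$0)"
    using y0 by (simp add: m2Z ze field_simps)
  have mr: "mr / Y$0$0 > 0" using sc(2) unfolding q1 Im_ii_real .
  have mr0: "mr > 0" using mr y0 by (simp add: zero_less_divide_iff)
  have q2: "det Z / m2 Z = \<i> * complex_of_real (det Y / mr)"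
    using mr0 by (simp add: m2Z dZ field_simps)
  have dr: "det Y / mr > 0" using sc(3) unfolding q2 Im_ii_real .
  have dY: "det Y > 0" using dr mr0 by (simp add: zero_less_divide_iff)
  have "f3 Z = Ln (Z$0$0) + Ln (m2 Z / Z$0$0) + Ln (det Z / m2 Z)" using Z by (simp add: f3_def)
  also have "\<dots> = Ln (\<i> * complex_of_real (Y$0$0)) + Ln (\<i> * complex_of_real (mr / Y$0$0)) + Ln (\<i> * complex_of_real (det Y / mr))"
    unfolding q1 q2 by (simp only: ze)
  also have "\<dots> = complex_of_real (ln (Y$0$0) + ln (mr / Y$0$0) + ln (det Y / mr)) + 3 * (\<i> * pi / 2)"
    by (simp only: Ln_ii_real[OF y0] Ln_ii_real[OF mr] Ln_ii_real[OF dr]) (simp add: algebra_simps)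
  also have "ln (Y$0$0) + ln (mr / Y$0$0) + ln (det Y / mr) = ln (det Y)"
    using y0 mr0 dY by (simp add: ln_div)
  finally show "f3 Z = pi * \<i> * of_nat CARD(3) / 2 + complex_of_real (ln (det Y))"
    by simp
qed




lemma mv2: "(Z *v x)$i = Z$i$0 * x$0 + Z$i$1 * x$1"
  for Z :: "'a::comm_semiring_1^2^2" by (simp add: matrix_vector_mult_def sum2)

lemma schur2:
  assumes Z: "(Z::complex^2^2) \<in> siegel_H"
  shows "Im (Z$0$0) > 0" "Im (det Z / Z$0$0) > 0"
proof -
  have sym: "transpose Z = Z" using Z by (simp add: siegel_H_def)
  note s = sym_entry[OF sym]
  define a b d where defs: "a = Z$0$0" "b = Z$0$1" "d = Z$1$1"
  have ents: "Z$0$0 = a" "Z$0$1 = b" "Z$1$0 = b" "Z$1$1 = d"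
    using s by (auto simp: defs)
  have dt: "det Z = a*d - b*b" by (simp add: det2 ents)
  have x1: "v2 (1::complex) 0 \<noteq> 0" by (metis v2_nth(1) zero_index one_neq_zero)
  from siegel_quad[OF Z x1] show a: "Im (Z$0$0) > 0" by (simp add: mv2 sum2)
  then have a0: "a \<noteq> 0" by (auto simp: defs)
  have x2: "v2 (-b/a) (1::complex) \<noteq> 0" by (metis v2_nth(2) zero_index one_neq_zero)
  have q: "(Z *v v2 (-b/a) 1)$0 = 0" "(Z *v v2 (-b/a) 1)$1 = det Z / Z$0$0"
    using a0 unfolding mv2 ents v2_nth dt by (simp_all add: field_simps)
  from siegel_quad[OF Z x2] show "Im (det Z / Z$0$0) > 0"
    unfolding sum2 q by simp
qed

lemma schur1:
  assumes Z: "(Z::complex^1^1) \<in> siegel_H"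
  shows "Im (Z$0$0) > 0"
proof -
  have x1: "(\<chi> k. 1) \<noteq> (0::complex^1)" by (metis vec_lambda_beta zero_index one_neq_zero)
  from siegel_quad[OF Z x1] have "Im (Z$1$1) > 0" by (simp add: matrix_vector_mult_def sum1)
  then show a: "Im (Z$0$0) > 0" by (simp only: one0)
qed

lemma cd_det2: "cd (\<lambda>Z::complex^2^2. det Z) Z"
  unfolding det2 by (intro cd_add cd_diff cd_mult cd_entry)

definition f2 :: "complex^2^2 \<Rightarrow> complex" where
  "f2 Z = (if Z \<in> siegel_H then Ln (Z$0$0) + Ln (det Z / Z$0$0) else 0)"

definition f1 :: "complex^1^1 \<Rightarrow> complex" where
  "f1 Z = (if Z \<in> siegel_H then Ln (Z$0$0) else 0)"

lemma hP_f2: "hP f2"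
  unfolding hP_def
proof (intro conjI ballI allI impI)
  show "holomorphic_siegel f2"
  proof (rule cd_holo)
    fix Z :: "complex^2^2" assume Z: "Z \<in> siegel_H"
    note sc = schur2[OF Z]
    have n: "Z$0$0 \<noteq> 0" using sc by auto
    show "cd (\<lambda>Z. Ln (Z$0$0) + Ln (det Z / Z$0$0)) Z"
      by (intro cd_add cd_Ln cd_divide cd_entry cd_det2 n sc)
    show "f2 Z = Ln (Z$0$0) + Ln (det Z / Z$0$0)" using Z by (simp add: f2_def)
  qed
next
  fix Z :: "complex^2^2" assume Z: "Z \<in> siegel_H"
  note sc = schur2[OF Z]
  have n: "Z$0$0 \<noteq> 0" "det Z / Z$0$0 \<noteq> 0" using sc by auto
  then show "exp (f2 Z) = det Z" using Z by (simp add: f2_def exp_add)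
next
  fix Z :: "complex^2^2" assume "Z \<notin> siegel_H" then show "f2 Z = 0" by (simp add: f2_def)
next
  fix Y :: "real^2^2" assume Y: "Y \<in> posdef_cone"
  define Z where "Z = (\<chi> i j. \<i> * complex_of_real (Y $ i $ j))"
  have Z: "Z \<in> siegel_H" unfolding Z_def by (rule posdef_siegel[OF Y])
  have ze: "Z$i$j = \<i> * complex_of_real (Y$i$j)" for i j by (simp add: Z_def)
  have dZ: "det Z = - complex_of_real (det Y)" by (simp add: det2 ze algebra_simps)
  note sc = schur2[OF Z]
  have y0: "Y$0$0 > 0" using sc(1) by (simp add: ze)
  have q1: "det Z / Z$0$0 = \<i> * complex_of_real (det Y / Y$0$0)"
    using y0 by (simp add: dZ ze field_simps)
  have mr: "det Y / Y$0$0 > 0" using sc(2) unfolding q1 Im_ii_real .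
  have dY: "det Y > 0" using mr y0 by (simp add: zero_less_divide_iff)
  have "f2 Z = Ln (Z$0$0) + Ln (det Z / Z$0$0)" using Z by (simp add: f2_def)
  also have "\<dots> = Ln (\<i> * complex_of_real (Y$0$0)) + Ln (\<i> * complex_of_real (det Y / Y$0$0))"
    unfolding q1 by (simp only: ze)
  also have "\<dots> = complex_of_real (ln (Y$0$0) + ln (det Y / Y$0$0)) + 2 * (\<i> * pi / 2)"
    by (simp only: Ln_ii_real[OF y0] Ln_ii_real[OF mr]) (simp add: algebra_simps)
  also have "ln (Y$0$0) + ln (det Y / Y$0$0) = ln (det Y)"
    using y0 dY by (simp add: ln_div)
  finally show "f2 Z = pi * \<i> * of_nat CARD(2) / 2 + complex_of_real (ln (det Y))"
    by simp
qed

lemma hP_f1: "hP f1"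
  unfolding hP_def
proof (intro conjI ballI allI impI)
  show "holomorphic_siegel f1"
  proof (rule cd_holo)
    fix Z :: "complex^1^1" assume Z: "Z \<in> siegel_H"
    note sc = schur1[OF Z]
    show "cd (\<lambda>Z. Ln (Z$0$0)) Z"
      by (intro cd_add cd_Ln cd_divide cd_entry sc)
    show "f1 Z = Ln (Z$0$0)" using Z by (simp add: f1_def)
  qed
next
  fix Z :: "complex^1^1" assume Z: "Z \<in> siegel_H"
  note sc = schur1[OF Z]
  have n: "Z$0$0 \<noteq> 0" using sc by auto
  then show "exp (f1 Z) = det Z" using Z by (simp add: f1_def det1)
next
  fix Z :: "complex^1^1" assume "Z \<notin> siegel_H" then show "f1 Z = 0" by (simp add: f1_def)
next
  fix Y :: "real^1^1" assume Y: "Y \<in> posdef_cone"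
  define Z where "Z = (\<chi> i j. \<i> * complex_of_real (Y $ i $ j))"
  have Z: "Z \<in> siegel_H" unfolding Z_def by (rule posdef_siegel[OF Y])
  have ze: "Z$i$j = \<i> * complex_of_real (Y$i$j)" for i j by (simp add: Z_def)
  note sc = schur1[OF Z]
  have y0: "Y$0$0 > 0" using sc(1) by (simp add: ze)
  have "f1 Z = Ln (\<i> * complex_of_real (Y$0$0))" using Z by (simp add: f1_def ze)
  also have "\<dots> = complex_of_real (ln (Y$0$0)) + \<i> * pi / 2"
    by (rule Ln_ii_real[OF y0])
  finally show "f1 Z = pi * \<i> * of_nat CARD(1) / 2 + complex_of_real (ln (det Y))"
    by (simp add: det1)
qed

lemma h3: "(h_siegel :: complex^3^3 \<Rightarrow> complex) = f3" by (rule h_siegel_eq[OF hP_f3])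
lemma h2: "(h_siegel :: complex^2^2 \<Rightarrow> complex) = f2" by (rule h_siegel_eq[OF hP_f2])
lemma h1: "(h_siegel :: complex^1^1 \<Rightarrow> complex) = f1" by (rule h_siegel_eq[OF hP_f1])




lemma all3: "(\<forall>i::3. P i) \<longleftrightarrow> P 0 \<and> P 1 \<and> P 2"
proof -
  have "(\<forall>i::3. P i) = (\<forall>i\<in>UNIV. P i)" by simp
  also have "\<dots> = (\<forall>i\<in>{0,1,2}. P i)" by (simp only: UNIV3)
  finally show ?thesis by simp
qed
lemma all2: "(\<forall>i::2. P i) \<longleftrightarrow> P 0 \<and> P 1"
proof -
  have "(\<forall>i::2. P i) = (\<forall>i\<in>UNIV. P i)" by simp
  also have "\<dots> = (\<forall>i\<in>{0,1}. P i)" by (simp only: UNIV2)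
  finally show ?thesis by simp
qed

lemma four1: "(4::3) = 1" by simp

definition cof :: "complex^3^3 \<Rightarrow> 3 \<Rightarrow> 3 \<Rightarrow> complex" where
  "cof Z k j = Z$(j+1)$(k+1) * Z$(j+2)$(k+2) - Z$(j+1)$(k+2) * Z$(j+2)$(k+1)"

lemma cof_r: "(\<Sum>k\<in>UNIV. Z$i$k * cof Z k j) = (if i = j then det Z else 0)"
proof -
  have "\<forall>i j. (\<Sum>k\<in>UNIV. Z$i$k * cof Z k j) = (if i = j then det Z else 0)"
    by (simp add: all3 sum3 cof_def det3 three0 four1) (simp add: algebra_simps)
  then show ?thesis by blast
qed

lemma cof_l: "(\<Sum>k\<in>UNIV. cof Z i k * Z$k$j) = (if i = j then det Z else 0)"
proof -
  have "\<forall>i j. (\<Sum>k\<in>UNIV. cof Z i k * Z$k$j) = (if i = j then det Z else 0)"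
    by (simp add: all3 sum3 cof_def det3 three0 four1) (simp add: algebra_simps)
  then show ?thesis by blast
qed

definition Inv3 :: "complex^3^3 \<Rightarrow> complex^3^3" where
  "Inv3 Z = (\<chi> i j. cof Z i j / det Z)"

lemma Inv3_right: assumes "det Z \<noteq> 0" shows "Z ** Inv3 Z = mat 1"
proof -
  have "(Z ** Inv3 Z)$i$j = mat 1 $i$j" for i j
  proof -
    have "(Z ** Inv3 Z)$i$j = (\<Sum>k\<in>UNIV. Z$i$k * cof Z k j) / det Z"
      by (simp add: matrix_matrix_mult_def Inv3_def sum_divide_distrib)
    then show ?thesis using assms by (simp add: cof_r mat_def)
  qed
  then show ?thesis by (simp add: vec_eq_iff)
qed

lemma Inv3_left: assumes "det Z \<noteq> 0" shows "Inv3 Z ** Z = mat 1"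
proof -
  have "(Inv3 Z ** Z)$i$j = mat 1 $i$j" for i j
  proof -
    have "(Inv3 Z ** Z)$i$j = (\<Sum>k\<in>UNIV. cof Z i k * Z$k$j) / det Z"
      by (simp add: matrix_matrix_mult_def Inv3_def sum_divide_distrib)
    then show ?thesis using assms by (simp add: cof_l mat_def)
  qed
  then show ?thesis by (simp add: vec_eq_iff)
qed

lemma im_sym: assumes "transpose Z = Z" shows "transpose (im_mat Z) = im_mat Z"
proof -
  note s = sym_entry[OF assms]
  show ?thesis by (simp add: transpose_def im_mat_def vec_eq_iff s)
qed

lemma inv_unique: assumes "Z ** M = mat 1" "M ** Z = mat 1" shows "matrix_inv Z = (M :: 'a::comm_ring_1^'n^'n)"
  unfolding matrix_inv_def
proof (rule some_equality)
  show "Z ** M = mat 1 \<and> M ** Z = mat 1" using assms by simp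
  fix A assume A: "Z ** A = mat 1 \<and> A ** Z = mat 1"
  have "A = A ** (Z ** M)" using assms by simp
  also have "\<dots> = (A ** Z) ** M" by (rule matrix_mul_assoc)
  also have "\<dots> = M" using A by simp
  finally show "A = M" .
qed

lemma neg_inv_siegel:
  fixes Z M :: "complex^'n^'n"
  assumes Z: "Z \<in> siegel_H" and r: "Z ** M = mat 1" and l: "M ** Z = mat 1"
  shows "- M \<in> siegel_H"
proof -
  have sym: "transpose Z = Z" using Z by (simp add: siegel_H_def)
  have "Z ** transpose M = mat 1"
    using arg_cong[OF l, of transpose] sym by (simp add: matrix_transpose_mul transpose_mat)
  then have "M = transpose M"
    by (metis l matrix_mul_assoc matrix_mul_lid matrix_mul_rid)
  then have tM: "transpose (- M) = - M" by (simp add: transpose_def vec_eq_iff)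
  have pd: "x \<bullet> (im_mat (- M) *v x) > 0" if x: "x \<noteq> 0" for x :: "real^'n"
  proof -
    define xc where "xc = (\<chi> i. complex_of_real (x$i))"
    define u where "u = M *v xc"
    have Zu: "Z *v u = xc" unfolding u_def by (simp add: matrix_vector_mul_assoc r)
    have xc0: "xc \<noteq> 0" using x by (auto simp: xc_def vec_eq_iff)
    have u0: "u \<noteq> 0" using Zu xc0 by auto
    define S where "S = (\<Sum>i\<in>UNIV. xc$i * u$i)"
    have e1: "x \<bullet> (im_mat (- M) *v x) = - Im S"
      unfolding qf_expand by (simp add: S_def qf_expand im_mat_def u_def matrix_vector_mult_def xc_def Im_sum sum_distrib_left
          sum_negf[symmetric] algebra_simps)
    have "S = (\<Sum>i\<in>UNIV. cnj ((Z *v u)$i) * u$i)"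
      unfolding S_def Zu by (simp add: xc_def)
    also have "\<dots> = cnj (\<Sum>i\<in>UNIV. cnj (u$i) * (Z *v u)$i)"
      by (simp add: cnj_sum mult.commute)
    finally have SS: "S = cnj (\<Sum>i\<in>UNIV. cnj (u$i) * (Z *v u)$i)" .
    define q where "q = (\<Sum>i\<in>UNIV. cnj (u$i) * (Z *v u)$i)"
    have "Im S = - Im q" unfolding SS q_def[symmetric] by simp
    with e1 siegel_quad[OF Z u0] show ?thesis unfolding q_def by simp
  qed
  show ?thesis using tM pd im_sym[OF tM] by (simp add: siegel_H_def posdef_cone_def)
qed

lemma W3_nth: "(W3 ** Z ** W3)$i$j = Z$(2-i)$(2-j)"
proof -
  have "\<forall>i j. (W3 ** Z ** W3)$i$j = Z$(2-i)$(2-j)"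
    by (simp add: all3 matrix_matrix_mult_def sum3 W3_def)
  then show ?thesis by blast
qed

lemma W3_siegel: assumes Z: "Z \<in> siegel_H" shows "W3 ** Z ** W3 \<in> siegel_H"
proof -
  have sym: "transpose Z = Z" using Z by (simp add: siegel_H_def)
  note s = sym_entry[OF sym]
  have t: "transpose (W3 ** Z ** W3) = W3 ** Z ** W3"
    by (simp add: transpose_def vec_eq_iff W3_nth s)
  have pd: "x \<bullet> (im_mat (W3 ** Z ** W3) *v x) > 0" if x: "x \<noteq> 0" for x :: "real^3"
  proof -
    define y where "y = v3 (x$2) (x$1) (x$0)"
    have y0: "y \<noteq> 0" using x by (auto simp: y_def vec_eq_iff all3)
    have "x \<bullet> (im_mat (W3 ** Z ** W3) *v x) = y \<bullet> (im_mat Z *v y)"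
      by (simp add: qf_expand sum3 im_mat_def W3_nth y_def algebra_simps)
    also have "\<dots> > 0" using Z y0 by (simp add: siegel_H_def posdef_cone_def)
    finally show ?thesis .
  qed
  show ?thesis using t pd im_sym[OF t] by (simp add: siegel_H_def posdef_cone_def)
qed

lemma block1_siegel: assumes Z: "Z \<in> siegel_H" shows "block1 Z \<in> siegel_H"
proof -
  have t: "transpose (block1 Z) = block1 Z" by (simp add: transpose_def vec_eq_iff block1_def)
  have a: "Im (Z$0$0) > 0" by (rule schur3(1)[OF Z])
  have pd: "x \<bullet> (im_mat (block1 Z) *v x) > 0" if x: "x \<noteq> 0" for x :: "real^1"
  proof -
    obtain i where "x$i \<noteq> 0" using x by (auto simp: vec_eq_iff)
    moreover have "i \<in> {0}" unfolding UNIV1[symmetric] by simp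
    ultimately have "x$0 \<noteq> 0" by simp
    then have "x$0 * x$0 > 0" by (metis not_real_square_gt_zero)
    moreover have "x \<bullet> (im_mat (block1 Z) *v x) = x$0 * x$0 * Im (Z$0$0)"
      by (simp add: qf_expand sum1 im_mat_def block1_def) (simp only: one0 simp_thms)
    ultimately show ?thesis using a by simp
  qed
  show ?thesis using t pd im_sym[OF t] by (simp add: siegel_H_def posdef_cone_def)
qed

lemma block2_nth: "block2 Z $ 0 $ 0 = Z$0$0" "block2 Z $ 0 $ 1 = Z$0$1" "block2 Z $ 1 $ 0 = Z$1$0" "block2 Z $ 1 $ 1 = Z$1$1"
  by (simp_all add: block2_def idx23_def)

lemma block2_siegel: assumes Z: "Z \<in> siegel_H" shows "block2 Z \<in> siegel_H"
proof -
  have sym: "transpose Z = Z" using Z by (simp add: siegel_H_def)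
  note s = sym_entry[OF sym]
  have t: "transpose (block2 Z) = block2 Z" by (simp add: transpose_def vec_eq_iff all2 block2_nth s)
  have pd: "x \<bullet> (im_mat (block2 Z) *v x) > 0" if x: "x \<noteq> 0" for x :: "real^2"
  proof -
    define y where "y = v3 (x$0) (x$1) 0"
    have y0: "y \<noteq> 0" using x unfolding y_def vec_eq_iff all2 by (metis v3_nth(1) v3_nth(2) zero_index)
    have "x \<bullet> (im_mat (block2 Z) *v x) = y \<bullet> (im_mat Z *v y)"
      by (simp add: qf_expand sum3 sum2 im_mat_def block2_nth y_def algebra_simps)
    also have "\<dots> > 0" using Z y0 by (simp add: siegel_H_def posdef_cone_def)
    finally show ?thesis .
  qed
  show ?thesis using t pd im_sym[OF t] by (simp add: siegel_H_def posdef_cone_def)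
qed




lemma cont_entry:
  fixes X :: "'b::topological_space \<Rightarrow> 'a::real_normed_vector^'n^'m"
  assumes "continuous_on S X"
  shows "continuous_on S (\<lambda>Z. X Z $ a $ b)"
proof -
  have "bounded_linear (\<lambda>A::'a^'n^'m. A$a$b)"
    by (rule bounded_linear_compose[of "\<lambda>x::'a^'n. x$b" "\<lambda>A::'a^'n^'m. A$a"]) (rule bounded_linear_vec_nth)+
  from bounded_linear.continuous_on[OF this assms] show ?thesis .
qed

lemmas CI = continuous_on_add continuous_on_diff continuous_on_mult continuous_on_minus continuous_on_const

definition L1 :: "complex^3^3 \<Rightarrow> complex" where "L1 X = Ln (X$0$0)"
definition L2 :: "complex^3^3 \<Rightarrow> complex" where "L2 X = Ln (X$0$0) + Ln (m2 X / X$0$0)"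
definition L3 :: "complex^3^3 \<Rightarrow> complex" where "L3 X = Ln (X$0$0) + Ln (m2 X / X$0$0) + Ln (det X / m2 X)"

lemma Im_pos_nonpos: "Im z > 0 \<Longrightarrow> z \<notin> \<real>\<^sub>\<le>\<^sub>0"
  by (auto simp: complex_nonpos_Reals_iff)

lemma cont_L:
  assumes c: "\<And>i j. continuous_on S (\<lambda>Z. X Z $i$j)" and H: "\<And>Z. Z \<in> S \<Longrightarrow> X Z \<in> siegel_H"
  shows "continuous_on S (\<lambda>Z. L1 (X Z))" "continuous_on S (\<lambda>Z. L2 (X Z))" "continuous_on S (\<lambda>Z. L3 (X Z))"
proof -
  have sc: "Im (X Z$0$0) > 0" "Im (m2 (X Z) / X Z$0$0) > 0" "Im (det (X Z) / m2 (X Z)) > 0" if "Z \<in> S" for Z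
    using schur3[OF H[OF that]] by auto
  have nz: "X Z$0$0 \<noteq> 0" "m2 (X Z) \<noteq> 0" if "Z \<in> S" for Z
    using sc[OF that] by auto
  have nz': "\<forall>Z\<in>S. X Z$0$0 \<noteq> 0" "\<forall>Z\<in>S. m2 (X Z) \<noteq> 0" using nz by auto
  have cm: "continuous_on S (\<lambda>Z. m2 (X Z))" unfolding m2_def by (intro CI c)
  have "continuous_on S (\<lambda>Z. X Z$0$0 * X Z$1$1 * X Z$2$2 + X Z$0$1 * X Z$1$2 * X Z$2$0 + X Z$0$2 * X Z$1$0 * X Z$2$1
  - X Z$0$0 * X Z$1$2 * X Z$2$1 - X Z$0$1 * X Z$1$0 * X Z$2$2 - X Z$0$2 * X Z$1$1 * X Z$2$0)"
    by (intro CI c)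
  then have cd: "continuous_on S (\<lambda>Z. det (X Z))" by (simp only: det3)
  show "continuous_on S (\<lambda>Z. L1 (X Z))" unfolding L1_def
    by (intro continuous_on_Ln' c Im_pos_nonpos sc)
  show "continuous_on S (\<lambda>Z. L2 (X Z))" unfolding L2_def
    by (intro CI continuous_on_Ln' continuous_on_divide c cm Im_pos_nonpos sc nz')
  show "continuous_on S (\<lambda>Z. L3 (X Z))" unfolding L3_def
    by (intro CI continuous_on_Ln' continuous_on_divide c cm cd Im_pos_nonpos sc nz')
qed

lemma hb1: assumes "X \<in> siegel_H" shows "h_siegel (block1 X) = L1 X" "exp (h_siegel (block1 X)) = X$0$0"
proof -
  have b: "block1 X \<in> siegel_H" by (rule block1_siegel[OF assms])
  show "h_siegel (block1 X) = L1 X" using b by (simp add: h1 f1_def L1_def block1_def)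
  show "exp (h_siegel (block1 X)) = X$0$0" using hP_f1 b unfolding hP_def h1
    by (simp add: det1 block1_def)
qed

lemma hb2: assumes "X \<in> siegel_H" shows "h_siegel (block2 X) = L2 X" "exp (h_siegel (block2 X)) = m2 X"
proof -
  have b: "block2 X \<in> siegel_H" by (rule block2_siegel[OF assms])
  have d: "det (block2 X) = m2 X" by (simp add: det2 m2_def block2_nth)
  show "h_siegel (block2 X) = L2 X" using b by (simp add: h2 f2_def L2_def d block2_nth)
  show "exp (h_siegel (block2 X)) = m2 X" using hP_f2 b unfolding hP_def h2
    by (simp add: d)
qed

lemma hh3: assumes "X \<in> siegel_H" shows "h_siegel X = L3 X" "exp (h_siegel X) = det X"
proof -
  show "h_siegel X = L3 X" using assms by (simp add: h3 f3_def L3_def)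
  show "exp (h_siegel X) = det X" using hP_f3 assms unfolding hP_def h3 by simp
qed

lemma det_ne0: assumes "Z \<in> siegel_H" shows "det (Z::complex^3^3) \<noteq> 0"
  using schur3(3)[OF assms] by auto

definition NN :: "complex^3^3 \<Rightarrow> complex^3^3" where "NN Z = - Inv3 Z"
definition VV :: "complex^3^3 \<Rightarrow> complex^3^3" where "VV Z = W3 ** Z ** W3"

lemma NN_siegel: assumes "Z \<in> siegel_H" shows "NN Z \<in> siegel_H"
proof -
  have d: "det Z \<noteq> 0" by (rule det_ne0[OF assms])
  show ?thesis unfolding NN_def by (rule neg_inv_siegel[OF assms Inv3_right[OF d] Inv3_left[OF d]])
qed
lemma VV_siegel: "Z \<in> siegel_H \<Longrightarrow> VV Z \<in> siegel_H"
  unfolding VV_def by (rule W3_siegel)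
lemma NN_inv: "Z \<in> siegel_H \<Longrightarrow> - matrix_inv Z = NN Z"
  unfolding NN_def using inv_unique[OF Inv3_right Inv3_left, OF det_ne0 det_ne0] by simp

lemma cont_id: "continuous_on S (\<lambda>Z::complex^3^3. Z $i$j)"
  by (intro cont_entry continuous_on_id)
lemma cont_det: "continuous_on S (\<lambda>Z::complex^3^3. det Z)"
proof -
  have "continuous_on S (\<lambda>Z::complex^3^3. Z$0$0 * Z$1$1 * Z$2$2 + Z$0$1 * Z$1$2 * Z$2$0 + Z$0$2 * Z$1$0 * Z$2$1
  - Z$0$0 * Z$1$2 * Z$2$1 - Z$0$1 * Z$1$0 * Z$2$2 - Z$0$2 * Z$1$1 * Z$2$0)"
    by (intro CI cont_id)
  then show ?thesis by (simp only: det3)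
qed
lemma cont_NN: "continuous_on siegel_H (\<lambda>Z. NN Z $i$j)"
  unfolding NN_def Inv3_def cof_def
  by (simp only: vec_lambda_beta vector_uminus_component, intro CI continuous_on_divide cont_id cont_det) (auto dest: det_ne0)
lemma cont_VV: "continuous_on siegel_H (\<lambda>Z. VV Z $i$j)"
  unfolding VV_def W3_nth by (rule cont_id)




definition I3 :: "complex^3^3" where "I3 = (\<chi> i j. \<i> * complex_of_real ((mat 1 :: real^3^3) $ i $ j))"

lemma I3_siegel: "I3 \<in> siegel_H" unfolding I3_def by (rule posdef_siegel[OF mat1_posdef])
lemma I3_nth: "I3$i$j = (if i = j then \<i> else 0)" by (simp add: I3_def mat_def)

lemma I3_sq: "I3 ** (- I3) = mat 1" "(- I3) ** I3 = mat 1"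
proof -
  have "\<forall>i j. (I3 ** (- I3))$i$j = mat 1 $i$j" "\<forall>i j. ((- I3) ** I3)$i$j = mat 1 $i$j"
    by (simp_all add: all3 matrix_matrix_mult_def sum3 I3_nth mat_def)
  then show "I3 ** (- I3) = mat 1" "(- I3) ** I3 = mat 1" by (simp_all add: vec_eq_iff)
qed

lemma NN_I3: "NN I3 = I3"
proof -
  have "- matrix_inv I3 = NN I3" by (rule NN_inv[OF I3_siegel])
  moreover have "matrix_inv I3 = - I3" by (rule inv_unique[OF I3_sq])
  ultimately show ?thesis by simp
qed

lemma VV_I3: "VV I3 = I3"
proof -
  have "\<forall>i j. VV I3 $i$j = I3 $i$j" by (simp add: all3 VV_def W3_nth I3_nth)
  then show ?thesis by (simp add: vec_eq_iff)
qed

lemma det_I3: "det I3 = - \<i>" by (simp add: det3 I3_nth)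
lemma m2_I3: "m2 I3 = - 1" by (simp add: m2_def I3_nth)
lemma L_I3: "L1 I3 = \<i> * pi / 2" "L2 I3 = \<i> * pi" "L3 I3 = 3 * (\<i> * pi) / 2"
proof -
  have a: "m2 I3 / I3$0$0 = \<i>" by (simp add: m2_I3 I3_nth divide_complex_def)
  have b: "det I3 / m2 I3 = \<i>" by (simp add: m2_I3 det_I3)
  show "L1 I3 = \<i> * pi / 2" by (simp add: L1_def I3_nth)
  show "L2 I3 = \<i> * pi" unfolding L2_def a by (simp add: I3_nth)
  show "L3 I3 = 3 * (\<i> * pi) / 2" unfolding L3_def a b by (simp add: I3_nth)
qed

lemma ident:
  fixes F G :: "complex^3^3 \<Rightarrow> complex"
  assumes c: "continuous_on siegel_H G" and FG: "\<And>Z. Z \<in> siegel_H \<Longrightarrow> F Z = G Z"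
    and e: "\<And>Z. Z \<in> siegel_H \<Longrightarrow> exp (F Z) = 1" and b: "G I3 = 0" and Z: "Z \<in> siegel_H"
  shows "F Z = 0"
proof -
  have "G Z = 0"
    by (rule exp1_const[OF connected_siegel c, of I3 Z]) (use FG e b I3_siegel Z in auto)
  then show ?thesis using FG Z by simp
qed

lemmas cLN = cont_L[OF cont_NN NN_siegel]
lemmas cLV = cont_L[OF cont_VV VV_siegel]
lemma cLZ: "continuous_on siegel_H (\<lambda>Z. L3 Z)"
  by (rule cont_L(3)[of siegel_H "\<lambda>Z. Z", OF cont_id])

lemma exp_pi: "exp (\<i> * pi) = -1" "exp (2 * (\<i> * pi)) = 1" "exp (3 * (\<i> * pi)) = -1"
proof -
  show e: "exp (\<i> * pi) = -1" by (rule exp_pi_i')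
  have "exp (of_nat 2 * (\<i> * pi)) = exp (\<i> * pi) ^ 2" by (rule exp_of_nat_mult)
  then show "exp (2 * (\<i> * pi)) = 1" unfolding e by simp
  have "exp (of_nat 3 * (\<i> * pi)) = exp (\<i> * pi) ^ 3" by (rule exp_of_nat_mult)
  then show "exp (3 * (\<i> * pi)) = -1" unfolding e by simp
qed

lemma VV_nth: "VV Z $ i $ j = Z$(2-i)$(2-j)" by (simp add: VV_def W3_nth)

lemma m2_ne0: assumes "X \<in> siegel_H" shows "m2 X \<noteq> 0"
proof
  assume "m2 X = 0" then show False using schur3(2)[OF assms] by simp
qed

lemma id1: assumes Z: "Z \<in> siegel_H"
  shows "h_siegel (block1 (NN Z)) - h_siegel (block2 (VV Z)) + h_siegel Z - \<i> * pi = 0"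
proof (rule ident[where G = "\<lambda>Z. L1 (NN Z) - L2 (VV Z) + L3 Z - \<i> * pi", OF _ _ _ _ Z])
  show "continuous_on siegel_H (\<lambda>Z. L1 (NN Z) - L2 (VV Z) + L3 Z - \<i> * pi)"
    by (intro CI cLN cLV cLZ)
  fix Z :: "complex^3^3" assume Z: "Z \<in> siegel_H"
  show "h_siegel (block1 (NN Z)) - h_siegel (block2 (VV Z)) + h_siegel Z - \<i> * pi = L1 (NN Z) - L2 (VV Z) + L3 Z - \<i> * pi"
    using hb1(1)[OF NN_siegel[OF Z]] hb2(1)[OF VV_siegel[OF Z]] hh3(1)[OF Z] by simp
  have d: "det Z \<noteq> 0" using det_ne0[OF Z] .
  have m: "m2 (VV Z) \<noteq> 0" using m2_ne0[OF VV_siegel[OF Z]] .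
  have m': "m2 (VV Z) = cof Z 0 0" by (simp add: m2_def VV_nth cof_def mult.commute)
  have n: "NN Z $0$0 = - (cof Z 0 0 / det Z)" by (simp add: NN_def Inv3_def)
  show "exp (h_siegel (block1 (NN Z)) - h_siegel (block2 (VV Z)) + h_siegel Z - \<i> * pi) = 1"
    using hb1(2)[OF NN_siegel[OF Z]] hb2(2)[OF VV_siegel[OF Z]] hh3(2)[OF Z] d m
    by (simp add: exp_diff exp_add exp_pi n m')
next
  show "L1 (NN I3) - L2 (VV I3) + L3 I3 - \<i> * pi = 0"
    by (simp add: NN_I3 VV_I3 L_I3 field_simps)
qed

lemma jac: "cof Z 0 0 * cof Z 1 1 - cof Z 0 1 * cof Z 1 0 = Z$2$2 * det Z"
  by (simp add: cof_def det3 three0 four1) (simp add: algebra_simps)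

lemma id2: assumes Z: "Z \<in> siegel_H"
  shows "h_siegel (block2 (NN Z)) - h_siegel (block1 (VV Z)) + h_siegel Z - 2 * (\<i> * pi) = 0"
proof (rule ident[where G = "\<lambda>Z. L2 (NN Z) - L1 (VV Z) + L3 Z - 2 * (\<i> * pi)", OF _ _ _ _ Z])
  show "continuous_on siegel_H (\<lambda>Z. L2 (NN Z) - L1 (VV Z) + L3 Z - 2 * (\<i> * pi))"
    by (intro CI cLN cLV cLZ)
  fix Z :: "complex^3^3" assume Z: "Z \<in> siegel_H"
  show "h_siegel (block2 (NN Z)) - h_siegel (block1 (VV Z)) + h_siegel Z - 2 * (\<i> * pi) = L2 (NN Z) - L1 (VV Z) + L3 Z - 2 * (\<i> * pi)"
    using hb2(1)[OF NN_siegel[OF Z]] hb1(1)[OF VV_siegel[OF Z]] hh3(1)[OF Z] by simp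
  have d: "det Z \<noteq> 0" using det_ne0[OF Z] .
  have v: "VV Z $0$0 \<noteq> 0" using schur3(1)[OF VV_siegel[OF Z]] by auto
  have v': "VV Z $0$0 = Z$2$2" by (simp add: VV_nth)
  have n: "m2 (NN Z) = Z$2$2 * det Z / (det Z * det Z)"
  proof -
    have "m2 (NN Z) = (cof Z 0 0 * cof Z 1 1 - cof Z 0 1 * cof Z 1 0) / (det Z * det Z)"
      using d by (simp add: m2_def NN_def Inv3_def field_simps)
    then show ?thesis by (simp add: jac)
  qed
  show "exp (h_siegel (block2 (NN Z)) - h_siegel (block1 (VV Z)) + h_siegel Z - 2 * (\<i> * pi)) = 1"
    using hb2(2)[OF NN_siegel[OF Z]] hb1(2)[OF VV_siegel[OF Z]] hh3(2)[OF Z] d v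
    unfolding v' by (simp add: exp_diff exp_add exp_pi n)
next
  show "L2 (NN I3) - L1 (VV I3) + L3 I3 - 2 * (\<i> * pi) = 0"
    by (simp add: NN_I3 VV_I3 L_I3 field_simps)
qed

lemma det_neg3: "det (- A) = - det (A::complex^3^3)"
  by (simp add: det3 algebra_simps)

lemma id3: assumes Z: "Z \<in> siegel_H"
  shows "h_siegel (NN Z) + h_siegel Z - 3 * (\<i> * pi) = 0"
proof (rule ident[where G = "\<lambda>Z. L3 (NN Z) + L3 Z - 3 * (\<i> * pi)", OF _ _ _ _ Z])
  show "continuous_on siegel_H (\<lambda>Z. L3 (NN Z) + L3 Z - 3 * (\<i> * pi))"
    by (intro CI cLN cLZ)
  fix Z :: "complex^3^3" assume Z: "Z \<in> siegel_H"
  show "h_siegel (NN Z) + h_siegel Z - 3 * (\<i> * pi) = L3 (NN Z) + L3 Z - 3 * (\<i> * pi)"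
    using hh3(1)[OF NN_siegel[OF Z]] hh3(1)[OF Z] by simp
  have d: "det Z \<noteq> 0" using det_ne0[OF Z] .
  have "det (Inv3 Z) * det Z = 1" using Inv3_left[OF d] by (metis det_I det_mul)
  then have n: "det (NN Z) * det Z = -1" by (simp add: NN_def det_neg3)
  show "exp (h_siegel (NN Z) + h_siegel Z - 3 * (\<i> * pi)) = 1"
    using hh3(2)[OF NN_siegel[OF Z]] hh3(2)[OF Z] n
    by (simp add: exp_diff exp_add exp_pi)
next
  show "L3 (NN I3) + L3 I3 - 3 * (\<i> * pi) = 0"
    by (simp add: NN_I3 L_I3 field_simps)
qed

lemma id4: assumes Z: "Z \<in> siegel_H"
  shows "h_siegel (VV Z) - h_siegel Z = 0"
proof (rule ident[where G = "\<lambda>Z. L3 (VV Z) - L3 Z", OF _ _ _ _ Z])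
  show "continuous_on siegel_H (\<lambda>Z. L3 (VV Z) - L3 Z)"
    by (intro CI cLV cLZ)
  fix Z :: "complex^3^3" assume Z: "Z \<in> siegel_H"
  show "h_siegel (VV Z) - h_siegel Z = L3 (VV Z) - L3 Z"
    using hh3(1)[OF VV_siegel[OF Z]] hh3(1)[OF Z] by simp
  have d: "det Z \<noteq> 0" using det_ne0[OF Z] .
  have v: "det (VV Z) = det Z" by (simp add: det3 VV_nth algebra_simps)
  show "exp (h_siegel (VV Z) - h_siegel Z) = 1"
    using hh3(2)[OF VV_siegel[OF Z]] hh3(2)[OF Z] d v
    by (simp add: exp_diff)
next
  show "L3 (VV I3) - L3 I3 = 0"
    by (simp add: VV_I3)
qed




lemma fin_alg:
  fixes s1 s2 s3 B1 B2 H :: complex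
  shows "exp (s1 * (B2 - H + \<i> * pi)) * exp (s2 * (B1 - H + 2 * (\<i> * pi))) * exp (s3 * (- H + 3 * (\<i> * pi))) =
    exp ((s1 + 2 * s2 + 3 * s3) * pi * \<i>) * (exp (s2 * B1) * exp (s1 * B2) * exp ((- s1 - s2 - s3) * H))"
proof -
  have "exp (s1 * (B2 - H + \<i> * pi)) * exp (s2 * (B1 - H + 2 * (\<i> * pi))) * exp (s3 * (- H + 3 * (\<i> * pi))) =
        exp (s1 * (B2 - H + \<i> * pi) + s2 * (B1 - H + 2 * (\<i> * pi)) + s3 * (- H + 3 * (\<i> * pi)))"
    by (simp only: exp_add)
  also have "s1 * (B2 - H + \<i> * pi) + s2 * (B1 - H + 2 * (\<i> * pi)) + s3 * (- H + 3 * (\<i> * pi)) =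
       (s1 + 2 * s2 + 3 * s3) * pi * \<i> + (s2 * B1 + s1 * B2 + (- s1 - s2 - s3) * H)"
    by (simp add: algebra_simps)
  also have "exp \<dots> = exp ((s1 + 2 * s2 + 3 * s3) * pi * \<i>) * (exp (s2 * B1) * exp (s1 * B2) * exp ((- s1 - s2 - s3) * H))"
    by (simp only: exp_add)
  finally show ?thesis .
qed

theorem claim1:
  fixes s1 s2 s3 :: complex and Z :: "complex^3^3"
  assumes "Z \<in> siegel_H"
  shows "p_fun s1 s2 s3 (- matrix_inv Z) =
         exp ((s1 + 2 * s2 + 3 * s3) * pi * \<i>) * p_fun s2 s1 (- s1 - s2 - s3) (W3 ** Z ** W3)"
proof -
  have N: "- matrix_inv Z = NN Z" by (rule NN_inv[OF assms])
  have V: "W3 ** Z ** W3 = VV Z" by (simp add: VV_def)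
  have a: "h_siegel (block1 (NN Z)) = h_siegel (block2 (VV Z)) - h_siegel Z + \<i> * pi"
    using id1[OF assms] by (simp add: algebra_simps)
  have b: "h_siegel (block2 (NN Z)) = h_siegel (block1 (VV Z)) - h_siegel Z + 2 * (\<i> * pi)"
    using id2[OF assms] by (simp add: algebra_simps)
  have c: "h_siegel (NN Z) = - h_siegel Z + 3 * (\<i> * pi)"
    using id3[OF assms] by (simp add: algebra_simps)
  have d: "h_siegel (VV Z) = h_siegel Z"
    using id4[OF assms] by simp
  show ?thesis
    unfolding N V p_fun_def a b c d by (rule fin_alg)
qed


end
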